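(* Let $\Omega\subset\mathbb{C}$ be a simply connected domain and let $(g,\mathcal{P},\mathcal{Q})$ be a Weierstrass data of the first kind on $\Omega$. Define $h:=\frac{1}{g}$ and $\mathcal{N}:=2\mathcal{P}$. Then there exists a $\mathcal{C}^2$ function $\mathcal{M}:\Omega\to\mathbb{R}$ such that $$\mathcal{M}_z=\frac{1}{g}\,\mathcal{P}_z+g\,\mathcal{Q}_z .$$ Moreover, for any such $\mathcal{M}$, the triple $(h,\mathcal{M},\mathcal{N})$ is a Weierstrass data of the second kind on $\Omega$, and $$\mathcal{M}_z-(\mathrm{Re}\,h)\,\mathcal{N}_z=-\frac{1}{\overline{g}}\left(\mathcal{P}_z-|g|^2\mathcal{Q}_z\right).$$
   Context: $\Omega\subset\mathbb{R}^2\equiv\mathbb{C}$ has complex coordinate $z=u+iv$, and $\partial_z=\frac12(\partial_u-i\partial_v)$, $\partial_{\overline z}=\frac12(\partial_u+i\partial_v)$; subscripts denote partial derivatives. A Weierstrass data of the first kind on $\Omega$ is a triple $(g,\mathcal{P},\mathcal{Q})$ where $g:\Omega\to\mathbb{C}\setminus\{0\}$ and $\mathcal{P},\mathcal{Q}:\Omega\to\mathbb{R}$ are $\mathcal{C}^2$, satisfying $g_{\overline z}=0$, $\mathcal{P}_{z\overline z}=|g|^2\mathcal{Q}_{z\overline z}$, and $\mathcal{P}_z-|g|^2\mathcal{Q}_z\neq0$ at every point of $\Omega$. A Weierstrass data of the second kind on $\Omega$ is a triple $(h,\mathcal{M},\mathcal{N})$ where $h:\Omega\to\mathbb{C}\setminus\{0\}$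 and $\mathcal{M},\mathcal{N}:\Omega\to\mathbb{R}$ are $\mathcal{C}^2$, satisfying $h_{\overline z}=0$, $\mathcal{M}_{z\overline z}=(\mathrm{Re}\,h)\,\mathcal{N}_{z\overline z}$, and $\mathcal{M}_z-(\mathrm{Re}\,h)\,\mathcal{N}_z\neq0$ at every point of $\Omega$. *)

theory Defs
  imports "HOL-Analysis.Analysis"
begin

definition pu :: "(complex \<Rightarrow> complex) \<Rightarrow> complex \<Rightarrow> complex" where
  "pu f z = vector_derivative (\<lambda>t::real. f (z + of_real t)) (at 0)"

definition pv :: "(complex \<Rightarrow> complex) \<Rightarrow> complex \<Rightarrow> complex" where
  "pv f z = vector_derivative (\<lambda>t::real. f (z + \<i> * of_real t)) (at 0)"

definition dz :: "(complex \<Rightarrow> complex) \<Rightarrow> complex \<Rightarrow> complex" where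
  "dz f z = (pu f z - \<i> * pv f z) / 2"

definition dzb :: "(complex \<Rightarrow> complex) \<Rightarrow> complex \<Rightarrow> complex" where
  "dzb f z = (pu f z + \<i> * pv f z) / 2"

definition cr :: "(complex \<Rightarrow> real) \<Rightarrow> complex \<Rightarrow> complex" where
  "cr f = (\<lambda>z. complex_of_real (f z))"

definition C1_on :: "complex set \<Rightarrow> (complex \<Rightarrow> complex) \<Rightarrow> bool" where
  "C1_on S f \<longleftrightarrow> (\<forall>z\<in>S. f differentiable (at z)) \<and>
      continuous_on S (pu f) \<and> continuous_on S (pv f)"

definition C2_on :: "complex set \<Rightarrow> (complex \<Rightarrow> complex) \<Rightarrow> bool" where
  "C2_on S f \<longleftrightarrow> C1_on S f \<and> C1_on S (pu f) \<and> C1_on S (pv f)"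

definition WD1 :: "complex set \<Rightarrow> (complex \<Rightarrow> complex) \<Rightarrow> (complex \<Rightarrow> real) \<Rightarrow> (complex \<Rightarrow> real) \<Rightarrow> bool" where
  "WD1 \<Omega> g P Q \<longleftrightarrow>
     C2_on \<Omega> g \<and> C2_on \<Omega> (cr P) \<and> C2_on \<Omega> (cr Q) \<and>
     (\<forall>z\<in>\<Omega>. g z \<noteq> 0) \<and>
     (\<forall>z\<in>\<Omega>. dzb g z = 0) \<and>
     (\<forall>z\<in>\<Omega>. dz (dzb (cr P)) z = complex_of_real ((cmod (g z))\<^sup>2) * dz (dzb (cr Q)) z) \<and>
     (\<forall>z\<in>\<Omega>. dz (cr P) z - complex_of_real ((cmod (g z))\<^sup>2) * dz (cr Q) z \<noteq> 0)"

definition WD2 :: "complex set \<Rightarrow> (complex \<Rightarrow> complex) \<Rightarrow> (complex \<Rightarrow> real) \<Rightarrow> (complex \<Rightarrow> real) \<Rightarrow> bool" where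
  "WD2 \<Omega> h M N \<longleftrightarrow>
     C2_on \<Omega> h \<and> C2_on \<Omega> (cr M) \<and> C2_on \<Omega> (cr N) \<and>
     (\<forall>z\<in>\<Omega>. h z \<noteq> 0) \<and>
     (\<forall>z\<in>\<Omega>. dzb h z = 0) \<and>
     (\<forall>z\<in>\<Omega>. dz (dzb (cr M)) z = complex_of_real (Re (h z)) * dz (dzb (cr N)) z) \<and>
     (\<forall>z\<in>\<Omega>. dz (cr M) z - complex_of_real (Re (h z)) * dz (cr N) z \<noteq> 0)"

end

theory Submission
  imports Defs "HOL-Complex_Analysis.Complex_Analysis"
begin

lemma line_u_deriv:
  assumes "(f has_derivative D) (at (w + of_real t0))"
  shows "((\<lambda>t::real. f (w + of_real t)) has_vector_derivative D 1) (at t0)"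
proof -
  have l: "((\<lambda>t::real. w + of_real t) has_derivative (\<lambda>s. of_real s)) (at t0)"
    by (rule has_derivative_eq_rhs, (rule derivative_intros)+, simp)
  have "((\<lambda>t::real. f (w + of_real t)) has_derivative (\<lambda>s. D (of_real s))) (at t0)"
    using has_derivative_compose[OF l assms] by simp
  moreover have "D (of_real s) = s *\<^sub>R D 1" for s
  proof -
    have "D (of_real s) = D (s *\<^sub>R 1)" by (simp add: scaleR_conv_of_real)
    also have "\<dots> = s *\<^sub>R D 1" by (rule linear_scale[OF has_derivative_linear[OF assms]])
    finally show ?thesis .
  qed
  ultimately show ?thesis unfolding has_vector_derivative_def by simp
qed

lemma line_v_deriv:
  assumes "(f has_derivative D) (at (w + \<i> * of_real t0))"
  shows "((\<lambda>t::real. f (w + \<i> * of_real t)) has_vector_derivative D \<i>) (at t0)"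
proof -
  have l: "((\<lambda>t::real. w + \<i> * of_real t) has_derivative (\<lambda>s. \<i> * of_real s)) (at t0)"
    by (rule has_derivative_eq_rhs, (rule derivative_intros)+, simp)
  have "((\<lambda>t::real. f (w + \<i> * of_real t)) has_derivative (\<lambda>s. D (\<i> * of_real s))) (at t0)"
    using has_derivative_compose[OF l assms] by simp
  moreover have "D (\<i> * of_real s) = s *\<^sub>R D \<i>" for s
  proof -
    have "D (\<i> * of_real s) = D (s *\<^sub>R \<i>)" by (simp add: scaleR_conv_of_real mult.commute)
    also have "\<dots> = s *\<^sub>R D \<i>" by (rule linear_scale[OF has_derivative_linear[OF assms]])
    finally show ?thesis .
  qed
  ultimately show ?thesis unfolding has_vector_derivative_def by simp
qed

lemma pu_deriv: "(f has_derivative D) (at z) \<Longrightarrow> pu f z = D 1"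
  unfolding pu_def using line_u_deriv[of f D z 0] by (simp add: vector_derivative_at)

lemma pv_deriv: "(f has_derivative D) (at z) \<Longrightarrow> pv f z = D \<i>"
  unfolding pv_def using line_v_deriv[of f D z 0] by (simp add: vector_derivative_at)

lemma lin_repr:
  assumes "linear D"
  shows "D h = of_real (Re h) * D 1 + of_real (Im h) * D \<i>"
proof -
  have e: "h = Re h *\<^sub>R 1 + Im h *\<^sub>R \<i>" by (simp add: complex_eq_iff)
  have "D h = D (Re h *\<^sub>R 1 + Im h *\<^sub>R \<i>)" by (rule arg_cong[OF e])
  also have "\<dots> = D (Re h *\<^sub>R 1) + D (Im h *\<^sub>R \<i>)"
    by (rule linear_add[OF assms])
  also have "\<dots> = Re h *\<^sub>R D 1 + Im h *\<^sub>R D \<i>"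
    by (simp add: linear_scale[OF assms])
  finally have "D h = Re h *\<^sub>R D 1 + Im h *\<^sub>R D \<i>" .
  then show ?thesis by (simp add: scaleR_conv_of_real)
qed

lemma deriv_repr:
  assumes "f differentiable (at z)"
  shows "(f has_derivative (\<lambda>h. of_real (Re h) * pu f z + of_real (Im h) * pv f z)) (at z)"
proof -
  obtain D where D: "(f has_derivative D) (at z)" using assms unfolding differentiable_def by blast
  have "D = (\<lambda>h. of_real (Re h) * pu f z + of_real (Im h) * pv f z)"
  proof
    fix h show "D h = of_real (Re h) * pu f z + of_real (Im h) * pv f z"
      unfolding pu_deriv[OF D] pv_deriv[OF D] by (rule lin_repr[OF has_derivative_linear[OF D]])
  qed
  then show ?thesis using D by simp
qed

lemma vd_cong:
  assumes "open T" "0 \<in> T" "\<And>t. t \<in> T \<Longrightarrow> f t = g t"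
  shows "vector_derivative f (at (0::real)) = vector_derivative g (at 0)"
proof -
  have "(f has_vector_derivative f') (at 0) \<longleftrightarrow> (g has_vector_derivative f') (at 0)" for f'
  proof
    assume "(f has_vector_derivative f') (at 0)"
    then show "(g has_vector_derivative f') (at 0)"
      by (rule has_vector_derivative_transform_within_open[OF _ assms(1,2)]) (simp add: assms(3))
  next
    assume "(g has_vector_derivative f') (at 0)"
    then show "(f has_vector_derivative f') (at 0)"
      by (rule has_vector_derivative_transform_within_open[OF _ assms(1,2)]) (simp add: assms(3))
  qed
  then show ?thesis unfolding vector_derivative_def by simp
qed

lemma pu_pv_cong:
  assumes "open S" "z \<in> S" "\<And>w. w \<in> S \<Longrightarrow> f w = g w"
  shows "pu f z = pu g z" "pv f z = pv g z"
proof -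
  have o1: "open ((\<lambda>t::real. z + of_real t) -` S)"
    by (rule continuous_open_vimage[OF assms(1)]) (intro continuous_intros)
  have o2: "open ((\<lambda>t::real. z + \<i> * of_real t) -` S)"
    by (rule continuous_open_vimage[OF assms(1)]) (intro continuous_intros)
  show "pu f z = pu g z" unfolding pu_def
    by (rule vd_cong[OF o1]) (use assms in auto)
  show "pv f z = pv g z" unfolding pv_def
    by (rule vd_cong[OF o2]) (use assms in auto)
qed

lemma real_partials:
  assumes "open S" "z \<in> S" "\<And>w. w \<in> S \<Longrightarrow> Im (f w) = 0" "f differentiable (at z)"
  shows "Im (pu f z) = 0" "Im (pv f z) = 0"
proof -
  let ?D = "\<lambda>h. of_real (Re h) * pu f z + of_real (Im h) * pv f z"
  have D: "(f has_derivative ?D) (at z)" by (rule deriv_repr[OF assms(4)])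
  have 1: "((\<lambda>w. Im (f w)) has_derivative (\<lambda>h. Im (?D h))) (at z)"
    by (rule bounded_linear.has_derivative[OF bounded_linear_Im D])
  have 2: "((\<lambda>w. Im (f w)) has_derivative (\<lambda>h. 0)) (at z)"
    by (rule has_derivative_transform_within_open[OF has_derivative_const assms(1,2)]) (simp add: assms(3))
  have e: "(\<lambda>h. Im (?D h)) = (\<lambda>h. 0)" by (rule has_derivative_unique[OF 1 2])
  show "Im (pu f z) = 0" using fun_cong[OF e, of 1] by simp
  show "Im (pv f z) = 0" using fun_cong[OF e, of \<i>] by simp
qed

lemma pu_pv_const: "pu (\<lambda>w. c) z = 0" "pv (\<lambda>w. c) z = 0"
  using pu_deriv[OF has_derivative_const] pv_deriv[OF has_derivative_const] by auto

lemma pu_pv_add: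
  assumes "f differentiable (at z)" "g differentiable (at z)"
  shows "pu (\<lambda>w. f w + g w) z = pu f z + pu g z" "pv (\<lambda>w. f w + g w) z = pv f z + pv g z"
proof -
  have "((\<lambda>w. f w + g w) has_derivative (\<lambda>h. (of_real (Re h) * pu f z + of_real (Im h) * pv f z) +
      (of_real (Re h) * pu g z + of_real (Im h) * pv g z))) (at z)"
    by (rule has_derivative_add[OF deriv_repr[OF assms(1)] deriv_repr[OF assms(2)]])
  from pu_deriv[OF this] pv_deriv[OF this]
  show "pu (\<lambda>w. f w + g w) z = pu f z + pu g z" "pv (\<lambda>w. f w + g w) z = pv f z + pv g z" by simp_all
qed

lemma pu_pv_diff:
  assumes "f differentiable (at z)" "g differentiable (at z)"
  shows "pu (\<lambda>w. f w - g w) z = pu f z - pu g z" "pv (\<lambda>w. f w - g w) z = pv f z - pv g z"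
proof -
  have "((\<lambda>w. f w - g w) has_derivative (\<lambda>h. (of_real (Re h) * pu f z + of_real (Im h) * pv f z) -
      (of_real (Re h) * pu g z + of_real (Im h) * pv g z))) (at z)"
    by (rule has_derivative_diff[OF deriv_repr[OF assms(1)] deriv_repr[OF assms(2)]])
  from pu_deriv[OF this] pv_deriv[OF this]
  show "pu (\<lambda>w. f w - g w) z = pu f z - pu g z" "pv (\<lambda>w. f w - g w) z = pv f z - pv g z" by simp_all
qed

lemma pu_pv_mult:
  assumes "f differentiable (at z)" "g differentiable (at z)"
  shows "pu (\<lambda>w. f w * g w) z = pu f z * g z + f z * pu g z"
        "pv (\<lambda>w. f w * g w) z = pv f z * g z + f z * pv g z"
proof -
  have "((\<lambda>w. f w * g w) has_derivative (\<lambda>h. f z * (of_real (Re h) * pu g z + of_real (Im h) * pv g z) +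
      (of_real (Re h) * pu f z + of_real (Im h) * pv f z) * g z)) (at z)"
    by (rule has_derivative_mult[OF deriv_repr[OF assms(1)] deriv_repr[OF assms(2)]])
  from pu_deriv[OF this] pv_deriv[OF this]
  show "pu (\<lambda>w. f w * g w) z = pu f z * g z + f z * pu g z"
       "pv (\<lambda>w. f w * g w) z = pv f z * g z + f z * pv g z" by (simp_all add: algebra_simps)
qed

lemma pu_pv_cnj:
  assumes "f differentiable (at z)"
  shows "pu (\<lambda>w. cnj (f w)) z = cnj (pu f z)" "pv (\<lambda>w. cnj (f w)) z = cnj (pv f z)"
proof -
  have "((\<lambda>w. cnj (f w)) has_derivative (\<lambda>h. cnj (of_real (Re h) * pu f z + of_real (Im h) * pv f z))) (at z)"
    by (rule has_derivative_cnj[OF deriv_repr[OF assms(1)]])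
  from pu_deriv[OF this] pv_deriv[OF this]
  show "pu (\<lambda>w. cnj (f w)) z = cnj (pu f z)" "pv (\<lambda>w. cnj (f w)) z = cnj (pv f z)" by simp_all
qed

lemma C1_diff: "C1_on S f \<Longrightarrow> z \<in> S \<Longrightarrow> f differentiable (at z)"
  unfolding C1_on_def by blast

lemma C1_pu: "C1_on S f \<Longrightarrow> continuous_on S (pu f)"
  unfolding C1_on_def by (elim conjE)

lemma C1_pv: "C1_on S f \<Longrightarrow> continuous_on S (pv f)"
  unfolding C1_on_def by (elim conjE)

lemma C1_onI: "(\<And>z. z \<in> S \<Longrightarrow> f differentiable (at z)) \<Longrightarrow> continuous_on S (pu f) \<Longrightarrow>
   continuous_on S (pv f) \<Longrightarrow> C1_on S f"
  unfolding C1_on_def by blast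

lemma C1_cont: "C1_on S f \<Longrightarrow> continuous_on S f"
proof (rule continuous_at_imp_continuous_on, rule ballI)
  fix x assume "C1_on S f" "x \<in> S"
  then have "f differentiable (at x)" by (rule C1_diff)
  then show "isCont f x" by (rule differentiable_imp_continuous_within)
qed

lemma C1_on_cong:
  assumes "open S" "\<And>z. z \<in> S \<Longrightarrow> f z = g z" "C1_on S f"
  shows "C1_on S g"
proof -
  have d: "g differentiable (at z)" if "z \<in> S" for z
  proof -
    have "f differentiable (at z)" by (rule C1_diff[OF assms(3) that])
    then obtain D where "(f has_derivative D) (at z)" unfolding differentiable_def by blast
    then have "(g has_derivative D) (at z)"
      by (rule has_derivative_transform_within_open[OF _ assms(1) that]) (simp add: assms(2))
    then show ?thesis unfolding differentiable_def by blast
  qed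
  have "continuous_on S (pu g)"
  proof (rule continuous_on_eq)
    show "continuous_on S (pu f)" using assms(3) by (rule C1_pu)
    fix x assume "x \<in> S" then show "pu f x = pu g x" by (rule pu_pv_cong(1)[OF assms(1) _ assms(2)])
  qed
  moreover have "continuous_on S (pv g)"
  proof (rule continuous_on_eq)
    show "continuous_on S (pv f)" using assms(3) by (rule C1_pv)
    fix x assume "x \<in> S" then show "pv f x = pv g x" by (rule pu_pv_cong(2)[OF assms(1) _ assms(2)])
  qed
  ultimately show ?thesis using d by (intro C1_onI)
qed

lemma C1_const: "C1_on S (\<lambda>z. c)"
  by (rule C1_onI) (auto simp: pu_pv_const)

lemma C1_add:
  assumes "C1_on S f" "C1_on S g"
  shows "C1_on S (\<lambda>z. f z + g z)"
proof -
  have cf: "continuous_on S f" "continuous_on S g" using C1_cont assms by auto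
  have "continuous_on S (pu (\<lambda>z. f z + g z))"
  proof (rule continuous_on_eq[of _ "\<lambda>z. pu f z + pu g z"])
    show "continuous_on S (\<lambda>z. pu f z + pu g z)"
      using assms cf by (intro continuous_intros C1_pu C1_pv)
  qed (simp add: pu_pv_add C1_diff[OF assms(1)] C1_diff[OF assms(2)])
  moreover have "continuous_on S (pv (\<lambda>z. f z + g z))"
  proof (rule continuous_on_eq[of _ "\<lambda>z. pv f z + pv g z"])
    show "continuous_on S (\<lambda>z. pv f z + pv g z)"
      using assms cf by (intro continuous_intros C1_pu C1_pv)
  qed (simp add: pu_pv_add C1_diff[OF assms(1)] C1_diff[OF assms(2)])
  ultimately show ?thesis by (intro C1_onI) (auto intro!: differentiable_add C1_diff[OF assms(1)] C1_diff[OF assms(2)])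
qed

lemma C1_diff_fun:
  assumes "C1_on S f" "C1_on S g"
  shows "C1_on S (\<lambda>z. f z - g z)"
proof -
  have cf: "continuous_on S f" "continuous_on S g" using C1_cont assms by auto
  have "continuous_on S (pu (\<lambda>z. f z - g z))"
  proof (rule continuous_on_eq[of _ "\<lambda>z. pu f z - pu g z"])
    show "continuous_on S (\<lambda>z. pu f z - pu g z)"
      using assms cf by (intro continuous_intros C1_pu C1_pv)
  qed (simp add: pu_pv_diff C1_diff[OF assms(1)] C1_diff[OF assms(2)])
  moreover have "continuous_on S (pv (\<lambda>z. f z - g z))"
  proof (rule continuous_on_eq[of _ "\<lambda>z. pv f z - pv g z"])
    show "continuous_on S (\<lambda>z. pv f z - pv g z)"
      using assms cf by (intro continuous_intros C1_pu C1_pv)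
  qed (simp add: pu_pv_diff C1_diff[OF assms(1)] C1_diff[OF assms(2)])
  ultimately show ?thesis by (intro C1_onI) (auto intro!: differentiable_diff C1_diff[OF assms(1)] C1_diff[OF assms(2)])
qed

lemma C1_mult:
  assumes "C1_on S f" "C1_on S g"
  shows "C1_on S (\<lambda>z. f z * g z)"
proof -
  have cf: "continuous_on S f" "continuous_on S g" using C1_cont assms by auto
  have "continuous_on S (pu (\<lambda>z. f z * g z))"
  proof (rule continuous_on_eq[of _ "\<lambda>z. pu f z * g z + f z * pu g z"])
    show "continuous_on S (\<lambda>z. pu f z * g z + f z * pu g z)"
      using assms cf unfolding C1_on_def by (intro continuous_intros) auto
  qed (simp add: pu_pv_mult C1_diff[OF assms(1)] C1_diff[OF assms(2)])
  moreover have "continuous_on S (pv (\<lambda>z. f z * g z))"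
  proof (rule continuous_on_eq[of _ "\<lambda>z. pv f z * g z + f z * pv g z"])
    show "continuous_on S (\<lambda>z. pv f z * g z + f z * pv g z)"
      using assms cf unfolding C1_on_def by (intro continuous_intros) auto
  qed (simp add: pu_pv_mult C1_diff[OF assms(1)] C1_diff[OF assms(2)])
  ultimately show ?thesis by (intro C1_onI) (auto intro!: differentiable_mult C1_diff[OF assms(1)] C1_diff[OF assms(2)])
qed

lemma C1_cnj:
  assumes "C1_on S f"
  shows "C1_on S (\<lambda>z. cnj (f z))"
proof -
  have cf: "continuous_on S f" using C1_cont assms by auto
  have "continuous_on S (pu (\<lambda>z. cnj (f z)))"
  proof (rule continuous_on_eq[of _ "\<lambda>z. cnj (pu f z)"])
    show "continuous_on S (\<lambda>z. cnj (pu f z))"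
      using assms cf by (intro continuous_intros C1_pu C1_pv)
  qed (simp add: pu_pv_cnj C1_diff[OF assms(1)])
  moreover have "continuous_on S (pv (\<lambda>z. cnj (f z)))"
  proof (rule continuous_on_eq[of _ "\<lambda>z. cnj (pv f z)"])
    show "continuous_on S (\<lambda>z. cnj (pv f z))"
      using assms cf by (intro continuous_intros C1_pu C1_pv)
  qed (simp add: pu_pv_cnj C1_diff[OF assms(1)])
  ultimately show ?thesis using assms by (intro C1_onI) (auto simp: differentiable_cnj_iff intro: C1_diff)
qed

lemma C2_C1: "C2_on S f \<Longrightarrow> C1_on S f" unfolding C2_on_def by (elim conjE)
lemma C2_pu: "C2_on S f \<Longrightarrow> C1_on S (pu f)" unfolding C2_on_def by (elim conjE)
lemma C2_pv: "C2_on S f \<Longrightarrow> C1_on S (pv f)" unfolding C2_on_def by (elim conjE)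
lemma C2_onI: "C1_on S f \<Longrightarrow> C1_on S (pu f) \<Longrightarrow> C1_on S (pv f) \<Longrightarrow> C2_on S f"
  unfolding C2_on_def by (intro conjI)

lemma C2_on_cong:
  assumes "open S" "\<And>z. z \<in> S \<Longrightarrow> f z = g z" "C2_on S f"
  shows "C2_on S g"
proof (rule C2_onI)
  show "C1_on S g" by (rule C1_on_cong[OF assms(1,2) C2_C1[OF assms(3)]])
  show "C1_on S (pu g)" by (rule C1_on_cong[OF assms(1) _ C2_pu[OF assms(3)]]) (rule pu_pv_cong(1)[OF assms(1) _ assms(2)])
  show "C1_on S (pv g)" by (rule C1_on_cong[OF assms(1) _ C2_pv[OF assms(3)]]) (rule pu_pv_cong(2)[OF assms(1) _ assms(2)])
qed

lemma C2_const: "C2_on S (\<lambda>z. c)"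
proof (rule C2_onI)
  show "C1_on S (\<lambda>z. c)" by (rule C1_const)
  have "pu (\<lambda>z. c) = (\<lambda>z. 0)" "pv (\<lambda>z. c) = (\<lambda>z. 0)" by (auto simp: pu_pv_const)
  then show "C1_on S (pu (\<lambda>z. c))" "C1_on S (pv (\<lambda>z. c))" by (simp_all add: C1_const)
qed

lemma C2_add:
  assumes "open S" "C2_on S f" "C2_on S g"
  shows "C2_on S (\<lambda>z. f z + g z)"
proof (rule C2_onI)
  note d = C1_diff[OF C2_C1[OF assms(2)]] C1_diff[OF C2_C1[OF assms(3)]]
  show "C1_on S (\<lambda>z. f z + g z)" by (rule C1_add[OF C2_C1[OF assms(2)] C2_C1[OF assms(3)]])
  show "C1_on S (pu (\<lambda>z. f z + g z))"
    by (rule C1_on_cong[OF assms(1) _ C1_add[OF C2_pu[OF assms(2)] C2_pu[OF assms(3)]]])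
       (simp add: pu_pv_add d)
  show "C1_on S (pv (\<lambda>z. f z + g z))"
    by (rule C1_on_cong[OF assms(1) _ C1_add[OF C2_pv[OF assms(2)] C2_pv[OF assms(3)]]])
       (simp add: pu_pv_add d)
qed

lemma C2_mult:
  assumes "open S" "C2_on S f" "C2_on S g"
  shows "C2_on S (\<lambda>z. f z * g z)"
proof (rule C2_onI)
  note d = C1_diff[OF C2_C1[OF assms(2)]] C1_diff[OF C2_C1[OF assms(3)]]
  note c = C2_C1[OF assms(2)] C2_C1[OF assms(3)] C2_pu[OF assms(2)] C2_pu[OF assms(3)]
     C2_pv[OF assms(2)] C2_pv[OF assms(3)]
  show "C1_on S (\<lambda>z. f z * g z)" by (rule C1_mult[OF C2_C1[OF assms(2)] C2_C1[OF assms(3)]])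
  show "C1_on S (pu (\<lambda>z. f z * g z))"
    by (rule C1_on_cong[OF assms(1) _ C1_add[OF C1_mult[OF c(3) c(2)] C1_mult[OF c(1) c(4)]]])
       (simp add: pu_pv_mult d)
  show "C1_on S (pv (\<lambda>z. f z * g z))"
    by (rule C1_on_cong[OF assms(1) _ C1_add[OF C1_mult[OF c(5) c(2)] C1_mult[OF c(1) c(6)]]])
       (simp add: pu_pv_mult d)
qed

lemma holo_pu_pv:
  assumes "f holomorphic_on S" "open S" "z \<in> S"
  shows "pu f z = deriv f z" "pv f z = \<i> * deriv f z"
proof -
  have "(f has_field_derivative deriv f z) (at z)" by (rule holomorphic_derivI[OF assms])
  then have D: "(f has_derivative (\<lambda>h. deriv f z * h)) (at z)" unfolding has_field_derivative_def .
  show "pu f z = deriv f z" using pu_deriv[OF D] by simp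
  show "pv f z = \<i> * deriv f z" using pv_deriv[OF D] by simp
qed

lemma holo_C1:
  assumes "f holomorphic_on S" "open S"
  shows "C1_on S f"
proof (rule C1_onI)
  fix z assume "z \<in> S"
  then show "f differentiable (at z)"
    using holomorphic_derivI[OF assms \<open>z \<in> S\<close>, of UNIV]
    by (auto simp: has_field_derivative_def differentiable_def)
next
  have h: "deriv f holomorphic_on S" by (rule holomorphic_deriv[OF assms])
  then have c: "continuous_on S (deriv f)" by (rule holomorphic_on_imp_continuous_on)
  show "continuous_on S (pu f)"
    by (rule continuous_on_eq[OF c]) (simp add: holo_pu_pv[OF assms])
  show "continuous_on S (pv f)"
    by (rule continuous_on_eq[of _ "\<lambda>z. \<i> * deriv f z"]) (auto intro!: continuous_intros c simp: holo_pu_pv[OF assms])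
qed

lemma holo_C2:
  assumes "f holomorphic_on S" "open S"
  shows "C2_on S f"
proof (rule C2_onI)
  show "C1_on S f" by (rule holo_C1[OF assms])
  have h: "deriv f holomorphic_on S" by (rule holomorphic_deriv[OF assms])
  show "C1_on S (pu f)"
    by (rule C1_on_cong[OF assms(2) _ holo_C1[OF h assms(2)]]) (simp add: holo_pu_pv[OF assms])
  have h2: "(\<lambda>z. \<i> * deriv f z) holomorphic_on S" by (intro holomorphic_intros h)
  show "C1_on S (pv f)"
    by (rule C1_on_cong[OF assms(2) _ holo_C1[OF h2 assms(2)]]) (simp add: holo_pu_pv[OF assms])
qed

lemma holo_dzb:
  assumes "f holomorphic_on S" "open S" "z \<in> S"
  shows "dzb f z = 0" "dz f z = deriv f z"
  unfolding dzb_def dz_def holo_pu_pv[OF assms] by (simp_all add: algebra_simps)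

lemma dzb_zero_holo:
  assumes "open S" "C1_on S f" "\<And>z. z \<in> S \<Longrightarrow> dzb f z = 0" "z \<in> S"
  shows "(f has_field_derivative pu f z) (at z)"
proof -
  have D: "(f has_derivative (\<lambda>h. of_real (Re h) * pu f z + of_real (Im h) * pv f z)) (at z)"
    by (rule deriv_repr[OF C1_diff[OF assms(2,4)]])
  have "pu f z + \<i> * pv f z = 0" using assms(3)[OF assms(4)] unfolding dzb_def by simp
  then have pv: "pv f z = \<i> * pu f z"
    by (metis (no_types, lifting) add.commute add_cancel_left_left complex_i_mult_minus mult.assoc mult_minus_right neg_eq_iff_add_eq_0)
  have "(\<lambda>h. of_real (Re h) * pu f z + of_real (Im h) * pv f z) = (\<lambda>h. pu f z * h)"
  proof
    fix h show "of_real (Re h) * pu f z + of_real (Im h) * pv f z = pu f z * h"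
      unfolding pv by (simp add: complex_eq_iff algebra_simps)
  qed
  then show ?thesis using D unfolding has_field_derivative_def by simp
qed

lemma dzb_zero_holo_on:
  assumes "open S" "C1_on S f" "\<And>z. z \<in> S \<Longrightarrow> dzb f z = 0"
  shows "f holomorphic_on S"
  using dzb_zero_holo[OF assms] assms(1)
  by (auto simp: holomorphic_on_def field_differentiable_def intro: has_field_derivative_at_within)

lemma dz_eq: "dz f = (\<lambda>z. (pu f z - \<i> * pv f z) / 2)" by (rule ext) (simp add: dz_def)
lemma dzb_eq: "dzb f = (\<lambda>z. (pu f z + \<i> * pv f z) / 2)" by (rule ext) (simp add: dzb_def)

lemma pu_pv_combp:
  assumes "a differentiable (at z)" "b differentiable (at z)"
  shows "pu (\<lambda>w. (a w + c * b w) / 2) z = (pu a z + c * pu b z) / 2"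
        "pv (\<lambda>w. (a w + c * b w) / 2) z = (pv a z + c * pv b z) / 2"
proof -
  note Da = deriv_repr[OF assms(1)] and Db = deriv_repr[OF assms(2)]
  have "((\<lambda>w. a w + c * b w) has_derivative
     (\<lambda>h. (of_real (Re h) * pu a z + of_real (Im h) * pv a z) +
           c * (of_real (Re h) * pu b z + of_real (Im h) * pv b z))) (at z)"
    by (rule has_derivative_add[OF Da has_derivative_mult_right[OF Db]])
  then have "((\<lambda>w. (a w + c * b w) / 2) has_derivative
     (\<lambda>h. ((of_real (Re h) * pu a z + of_real (Im h) * pv a z) +
           c * (of_real (Re h) * pu b z + of_real (Im h) * pv b z)) / 2)) (at z)"
    by (rule bounded_linear.has_derivative[OF bounded_linear_divide])
  from pu_deriv[OF this] pv_deriv[OF this]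
  show "pu (\<lambda>w. (a w + c * b w) / 2) z = (pu a z + c * pu b z) / 2"
       "pv (\<lambda>w. (a w + c * b w) / 2) z = (pv a z + c * pv b z) / 2" by simp_all
qed

lemma pu_pv_combm:
  assumes "a differentiable (at z)" "b differentiable (at z)"
  shows "pu (\<lambda>w. (a w - c * b w) / 2) z = (pu a z - c * pu b z) / 2"
        "pv (\<lambda>w. (a w - c * b w) / 2) z = (pv a z - c * pv b z) / 2"
proof -
  note Da = deriv_repr[OF assms(1)] and Db = deriv_repr[OF assms(2)]
  have "((\<lambda>w. a w - c * b w) has_derivative
     (\<lambda>h. (of_real (Re h) * pu a z + of_real (Im h) * pv a z) -
           c * (of_real (Re h) * pu b z + of_real (Im h) * pv b z))) (at z)"
    by (rule has_derivative_diff[OF Da has_derivative_mult_right[OF Db]])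
  then have "((\<lambda>w. (a w - c * b w) / 2) has_derivative
     (\<lambda>h. ((of_real (Re h) * pu a z + of_real (Im h) * pv a z) -
           c * (of_real (Re h) * pu b z + of_real (Im h) * pv b z)) / 2)) (at z)"
    by (rule bounded_linear.has_derivative[OF bounded_linear_divide])
  from pu_deriv[OF this] pv_deriv[OF this]
  show "pu (\<lambda>w. (a w - c * b w) / 2) z = (pu a z - c * pu b z) / 2"
       "pv (\<lambda>w. (a w - c * b w) / 2) z = (pv a z - c * pv b z) / 2" by simp_all
qed

lemma second_formulas:
  assumes "pu f differentiable (at z)" "pv f differentiable (at z)"
  shows "dz (dzb f) z = (pu (pu f) z + \<i> * pu (pv f) z - \<i> * pv (pu f) z + pv (pv f) z) / 4"
        "dzb (dz f) z = (pu (pu f) z - \<i> * pu (pv f) z + \<i> * pv (pu f) z + pv (pv f) z) / 4"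
proof -
  show "dz (dzb f) z = (pu (pu f) z + \<i> * pu (pv f) z - \<i> * pv (pu f) z + pv (pv f) z) / 4"
    unfolding dzb_eq dz_def pu_pv_combp[OF assms]
    by (simp add: field_simps)
  show "dzb (dz f) z = (pu (pu f) z - \<i> * pu (pv f) z + \<i> * pv (pu f) z + pv (pv f) z) / 4"
    unfolding dz_eq dzb_def pu_pv_combm[OF assms]
    by (simp add: field_simps)
qed

lemma C1_combp:
  assumes "C1_on S a" "C1_on S b"
  shows "C1_on S (\<lambda>w. (a w + c * b w) / 2)"
proof -
  have e: "(\<lambda>w. (a w + c * b w) / 2) = (\<lambda>w. (a w + (\<lambda>_. c) w * b w) * (\<lambda>_. 1/2) w)" by (auto simp: field_simps)
  show ?thesis unfolding e by (intro C1_mult C1_add C1_const assms)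
qed

lemma C1_combm:
  assumes "C1_on S a" "C1_on S b"
  shows "C1_on S (\<lambda>w. (a w - c * b w) / 2)"
proof -
  have e: "(\<lambda>w. (a w - c * b w) / 2) = (\<lambda>w. (a w - (\<lambda>_. c) w * b w) * (\<lambda>_. 1/2) w)" by (auto simp: field_simps)
  show ?thesis unfolding e by (intro C1_mult C1_diff_fun C1_const assms)
qed

lemma C1_dz: "C2_on S f \<Longrightarrow> C1_on S (dz f)"
  unfolding dz_eq by (intro C1_combm C2_pu C2_pv)

lemma C1_dzb: "C2_on S f \<Longrightarrow> C1_on S (dzb f)"
  unfolding dzb_eq by (intro C1_combp C2_pu C2_pv)

lemma real_second:
  assumes "open S" "C2_on S f" "\<And>w. w \<in> S \<Longrightarrow> Im (f w) = 0" "z \<in> S"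
  shows "Im (pu f z) = 0" "Im (pv f z) = 0" "Im (pu (pu f) z) = 0" "Im (pv (pu f) z) = 0"
        "Im (pu (pv f) z) = 0" "Im (pv (pv f) z) = 0"
proof -
  have r1: "Im (pu f w) = 0" "Im (pv f w) = 0" if "w \<in> S" for w
    using real_partials[OF assms(1) that assms(3) C1_diff[OF C2_C1[OF assms(2)] that]] by auto
  show "Im (pu f z) = 0" "Im (pv f z) = 0" using r1 assms(4) by auto
  show "Im (pu (pu f) z) = 0" "Im (pv (pu f) z) = 0"
    using real_partials[OF assms(1) assms(4) r1(1) C1_diff[OF C2_pu[OF assms(2)] assms(4)]] by auto
  show "Im (pu (pv f) z) = 0" "Im (pv (pv f) z) = 0"
    using real_partials[OF assms(1) assms(4) r1(2) C1_diff[OF C2_pv[OF assms(2)] assms(4)]] by auto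
qed

lemma pderiv_u:
  assumes "f differentiable (at (z + of_real t + \<i> * of_real \<tau>))"
  shows "((\<lambda>t. Re (f (z + of_real t + \<i> * of_real \<tau>))) has_real_derivative
           Re (pu f (z + of_real t + \<i> * of_real \<tau>))) (at t)"
proof -
  have e: "\<And>t. z + of_real t + \<i> * of_real \<tau> = (z + \<i> * of_real \<tau>) + of_real t" by (simp add: algebra_simps)
  obtain D where D: "(f has_derivative D) (at (z + \<i> * of_real \<tau> + of_real t))"
    using assms unfolding e differentiable_def by blast
  have "((\<lambda>t. f ((z + \<i> * of_real \<tau>) + of_real t)) has_vector_derivative D 1) (at t)"
    by (rule line_u_deriv[OF D])
  then have "((\<lambda>t. Re (f ((z + \<i> * of_real \<tau>) + of_real t))) has_vector_derivative Re (D 1)) (at t)"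
    by (rule bounded_linear.has_vector_derivative[OF bounded_linear_Re])
  then show ?thesis unfolding e pu_deriv[OF D] has_real_derivative_iff_has_vector_derivative .
qed

lemma pderiv_v:
  assumes "f differentiable (at (z + of_real t + \<i> * of_real \<tau>))"
  shows "((\<lambda>\<tau>. Re (f (z + of_real t + \<i> * of_real \<tau>))) has_real_derivative
           Re (pv f (z + of_real t + \<i> * of_real \<tau>))) (at \<tau>)"
proof -
  obtain D where D: "(f has_derivative D) (at (z + of_real t + \<i> * of_real \<tau>))"
    using assms unfolding differentiable_def by blast
  have "((\<lambda>\<tau>. f ((z + of_real t) + \<i> * of_real \<tau>)) has_vector_derivative D \<i>) (at \<tau>)"
    by (rule line_v_deriv[OF D])
  then have "((\<lambda>\<tau>. Re (f ((z + of_real t) + \<i> * of_real \<tau>))) has_vector_derivative Re (D \<i>)) (at \<tau>)"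
    by (rule bounded_linear.has_vector_derivative[OF bounded_linear_Re])
  then show ?thesis unfolding pv_deriv[OF D] has_real_derivative_iff_has_vector_derivative .
qed

lemma schwarz_re:
  assumes S: "open S" and f: "C2_on S f" and z: "z \<in> S"
  shows "Re (pu (pv f) z) = Re (pv (pu f) z)"
proof (rule ccontr)
  let ?A = "Re (pv (pu f) z)" and ?B = "Re (pu (pv f) z)"
  assume ne: "?B \<noteq> ?A"
  define e where "e = \<bar>?A - ?B\<bar> / 2"
  have e: "e > 0" using ne unfolding e_def by auto
  have c1: "continuous_on S (\<lambda>w. Re (pv (pu f) w))"
    by (intro continuous_intros C1_pv C2_pu f)
  have c2: "continuous_on S (\<lambda>w. Re (pu (pv f) w))"
    by (intro continuous_intros C1_pu C2_pv f)
  have "isCont (\<lambda>w. Re (pv (pu f) w)) z" using c1 S z by (simp add: continuous_on_eq_continuous_at)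
  then obtain d1 where d1: "d1 > 0" "\<And>w. dist w z < d1 \<Longrightarrow> \<bar>Re (pv (pu f) w) - ?A\<bar> < e"
    using e unfolding continuous_at_eps_delta dist_real_def by blast
  have "isCont (\<lambda>w. Re (pu (pv f) w)) z" using c2 S z by (simp add: continuous_on_eq_continuous_at)
  then obtain d2 where d2: "d2 > 0" "\<And>w. dist w z < d2 \<Longrightarrow> \<bar>Re (pu (pv f) w) - ?B\<bar> < e"
    using e unfolding continuous_at_eps_delta dist_real_def by blast
  obtain d0 where d0: "d0 > 0" "ball z d0 \<subseteq> S" using S z open_contains_ball by blast
  define d where "d = min d0 (min d1 d2)"
  have d: "d > 0" "d \<le> d0" "d \<le> d1" "d \<le> d2" using d0 d1 d2 unfolding d_def by auto
  define s where "s = d / 3"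
  have s: "s > 0" using d unfolding s_def by auto
  define p where "p t \<tau> = z + of_real t + \<i> * of_real \<tau>" for t \<tau> :: real
  have pd: "dist (p t \<tau>) z < d" if "0 \<le> t" "t \<le> s" "0 \<le> \<tau>" "\<tau> \<le> s" for t \<tau>
  proof -
    have "dist (p t \<tau>) z = cmod (of_real t + \<i> * of_real \<tau>)" unfolding p_def dist_complex_def by simp
    also have "\<dots> \<le> cmod (of_real t) + cmod (\<i> * of_real \<tau>)" by (rule norm_triangle_ineq)
    also have "\<dots> \<le> 2 * s" using that by (simp add: norm_mult)
    also have "\<dots> < d" using d unfolding s_def by simp
    finally show ?thesis .
  qed
  have pS: "p t \<tau> \<in> S" if "0 \<le> t" "t \<le> s" "0 \<le> \<tau>" "\<tau> \<le> s" for t \<tau>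
    using pd[OF that] d d0 by (auto simp: dist_commute)
  have pS0: "z + of_real t \<in> S" if "0 \<le> t" "t \<le> s" for t
    using pS[of t 0] that s unfolding p_def by simp
  have pS0': "z + \<i> * of_real t \<in> S" if "0 \<le> t" "t \<le> s" for t
    using pS[of 0 t] that s unfolding p_def by simp
  note df = C1_diff[OF C2_C1[OF f]] and dpu = C1_diff[OF C2_pu[OF f]] and dpv = C1_diff[OF C2_pv[OF f]]
  have "\<exists>t1. 0 < t1 \<and> t1 < s \<and>
     (Re (f (p s s)) - Re (f (p s 0))) - (Re (f (p 0 s)) - Re (f (p 0 0))) =
      (s - 0) * (Re (pu f (p t1 s)) - Re (pu f (p t1 0)))"
  proof (rule MVT2[of 0 s "\<lambda>t. Re (f (p t s)) - Re (f (p t 0))"])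
    fix t assume "0 \<le> t" "t \<le> s"
    then show "((\<lambda>t. Re (f (p t s)) - Re (f (p t 0))) has_real_derivative
             Re (pu f (p t s)) - Re (pu f (p t 0))) (at t)"
      unfolding p_def using s
      by (intro DERIV_diff pderiv_u df) (auto simp: pS[unfolded p_def] pS0 pS0')
  qed (rule s)
  then obtain t1 where t1: "0 < t1" "t1 < s"
    "(Re (f (p s s)) - Re (f (p s 0))) - (Re (f (p 0 s)) - Re (f (p 0 0))) =
      s * (Re (pu f (p t1 s)) - Re (pu f (p t1 0)))" by auto
  have "\<exists>\<tau>1. 0 < \<tau>1 \<and> \<tau>1 < s \<and> Re (pu f (p t1 s)) - Re (pu f (p t1 0)) = (s - 0) * Re (pv (pu f) (p t1 \<tau>1))"
  proof (rule MVT2[of 0 s "\<lambda>\<tau>. Re (pu f (p t1 \<tau>))"])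
    fix \<tau> assume "0 \<le> \<tau>" "\<tau> \<le> s"
    then show "((\<lambda>\<tau>. Re (pu f (p t1 \<tau>))) has_real_derivative Re (pv (pu f) (p t1 \<tau>))) (at \<tau>)"
      unfolding p_def using t1 by (intro pderiv_v dpu) (auto simp: pS[unfolded p_def] pS0 pS0')
  qed (rule s)
  then obtain \<tau>1 where \<tau>1: "0 < \<tau>1" "\<tau>1 < s" "Re (pu f (p t1 s)) - Re (pu f (p t1 0)) = s * Re (pv (pu f) (p t1 \<tau>1))"
    by auto
  have "\<exists>\<tau>2. 0 < \<tau>2 \<and> \<tau>2 < s \<and>
     (Re (f (p s s)) - Re (f (p 0 s))) - (Re (f (p s 0)) - Re (f (p 0 0))) =
      (s - 0) * (Re (pv f (p s \<tau>2)) - Re (pv f (p 0 \<tau>2)))"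
  proof (rule MVT2[of 0 s "\<lambda>\<tau>. Re (f (p s \<tau>)) - Re (f (p 0 \<tau>))"])
    fix \<tau> assume "0 \<le> \<tau>" "\<tau> \<le> s"
    then show "((\<lambda>\<tau>. Re (f (p s \<tau>)) - Re (f (p 0 \<tau>))) has_real_derivative
             Re (pv f (p s \<tau>)) - Re (pv f (p 0 \<tau>))) (at \<tau>)"
      unfolding p_def using s
      by (intro DERIV_diff pderiv_v df) (auto simp: pS[unfolded p_def] pS0 pS0')
  qed (rule s)
  then obtain \<tau>2 where \<tau>2: "0 < \<tau>2" "\<tau>2 < s"
    "(Re (f (p s s)) - Re (f (p 0 s))) - (Re (f (p s 0)) - Re (f (p 0 0))) =
      s * (Re (pv f (p s \<tau>2)) - Re (pv f (p 0 \<tau>2)))" by auto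
  have "\<exists>t2. 0 < t2 \<and> t2 < s \<and> Re (pv f (p s \<tau>2)) - Re (pv f (p 0 \<tau>2)) = (s - 0) * Re (pu (pv f) (p t2 \<tau>2))"
  proof (rule MVT2[of 0 s "\<lambda>t. Re (pv f (p t \<tau>2))"])
    fix t assume "0 \<le> t" "t \<le> s"
    then show "((\<lambda>t. Re (pv f (p t \<tau>2))) has_real_derivative Re (pu (pv f) (p t \<tau>2))) (at t)"
      unfolding p_def using \<tau>2 by (intro pderiv_u dpv) (auto simp: pS[unfolded p_def] pS0 pS0')
  qed (rule s)
  then obtain t2 where t2: "0 < t2" "t2 < s" "Re (pv f (p s \<tau>2)) - Re (pv f (p 0 \<tau>2)) = s * Re (pu (pv f) (p t2 \<tau>2))"
    by auto
  have "s * (s * Re (pv (pu f) (p t1 \<tau>1))) = s * (s * Re (pu (pv f) (p t2 \<tau>2)))"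
    using t1(3) \<tau>1(3) \<tau>2(3) t2(3) by (simp add: algebra_simps)
  then have X: "Re (pv (pu f) (p t1 \<tau>1)) = Re (pu (pv f) (p t2 \<tau>2))" using s by simp
  have "\<bar>Re (pv (pu f) (p t1 \<tau>1)) - ?A\<bar> < e"
    by (rule d1(2)) (use pd[of t1 \<tau>1] t1 \<tau>1 d in auto)
  moreover have "\<bar>Re (pu (pv f) (p t2 \<tau>2)) - ?B\<bar> < e"
    by (rule d2(2)) (use pd[of t2 \<tau>2] t2 \<tau>2 d in auto)
  moreover have "\<And>X Y A B::real. \<bar>X - A\<bar> < \<bar>A - B\<bar> / 2 \<Longrightarrow> \<bar>Y - B\<bar> < \<bar>A - B\<bar> / 2 \<Longrightarrow> X = Y \<Longrightarrow> False"
    by (simp add: abs_if split: if_split_asm)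
  ultimately show False using X unfolding e_def by blast
qed

definition DG :: "(complex \<Rightarrow> complex) \<Rightarrow> complex \<Rightarrow> complex \<Rightarrow> complex" where
  "DG G w h = of_real (Re h) * pu G w + of_real (Im h) * pv G w"

lemma DG_scale: "DG G w (of_real s * k) = of_real s * DG G w k"
  unfolding DG_def by (simp add: algebra_simps)

lemma DG_deriv: "G differentiable (at w) \<Longrightarrow> (G has_derivative DG G w) (at w)"
  unfolding DG_def[abs_def] by (rule deriv_repr)

lemma DG_linear: "linear (DG G w)"
  by (rule linearI) (simp_all add: DG_def algebra_simps scaleR_conv_of_real)

lemma DG_sym:
  assumes "Im (dzb G w) = 0"
  shows "Re (DG G w h * k) = Re (DG G w k * h)"
proof -
  have "Im (pu G w) + Re (pv G w) = 0" using assms unfolding dzb_def by simp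
  then have e: "Im (pu G w) = - Re (pv G w)" by simp
  show ?thesis unfolding DG_def by (simp add: e algebra_simps)
qed

lemma convex_scale_mem:
  assumes "convex W" "0 \<in> W" "x \<in> W" "0 \<le> t" "t \<le> 1"
  shows "of_real t * x \<in> W"
proof -
  have "(1 - t) *\<^sub>R 0 + t *\<^sub>R x \<in> W" using assms unfolding convex_alt by blast
  then show ?thesis by (simp add: scaleR_conv_of_real)
qed

lemma poincare:
  assumes W: "open W" "convex W" "0 \<in> W" and G: "C1_on W G"
    and cl: "\<And>w. w \<in> W \<Longrightarrow> Im (dzb G w) = 0"
  shows "\<exists>m. \<forall>z\<in>W. (m has_derivative (\<lambda>h. Re (G z * h))) (at z)"
proof -
  define m where "m = (\<lambda>x. integral (cbox 0 (1::real)) (\<lambda>t. Re (G (of_real t * x) * x)))"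
  have bl: "bounded_linear (\<lambda>h. t * Re (DG G w h * x) + Re (G w * h))" for t w x
    unfolding linear_conv_bounded_linear[symmetric]
    by (rule linearI) (simp_all add: DG_def algebra_simps scaleR_conv_of_real)
  define fx where "fx x t = Blinfun (\<lambda>h. t * Re (DG G (of_real t * x) h * x) + Re (G (of_real t * x) * h))" for x t
  have fx_app: "blinfun_apply (fx x t) = (\<lambda>h. t * Re (DG G (of_real t * x) h * x) + Re (G (of_real t * x) * h))" for x t
    unfolding fx_def by (rule bounded_linear_Blinfun_apply[OF bl])
  have "(m has_derivative (\<lambda>h. Re (G z0 * h))) (at z0)" if z0: "z0 \<in> W" for z0
  proof -
    obtain r where r: "r > 0" "ball z0 r \<subseteq> W" using W(1) z0 open_contains_ball by blast
    define U where "U = ball z0 r"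
    have U: "open U" "convex U" "z0 \<in> U" "U \<subseteq> W" using r unfolding U_def by auto
    have tW: "of_real t * x \<in> W" if "x \<in> U" "t \<in> cbox 0 1" for x t
      using convex_scale_mem[OF W(2,3)] that U(4) by auto
    have der: "((\<lambda>x. Re (G (of_real t * x) * x)) has_derivative blinfun_apply (fx x t)) (at x within U)"
      if "x \<in> U" "t \<in> cbox 0 1" for x t
    proof -
      have Gd: "(G has_derivative DG G (of_real t * x)) (at (of_real t * x))"
        by (rule DG_deriv[OF C1_diff[OF G tW[OF that]]])
      have l: "((\<lambda>x. of_real t * x) has_derivative (\<lambda>h. of_real t * h)) (at x within U)"
        by (rule has_derivative_mult_right[OF has_derivative_ident])
      have "((\<lambda>x. G (of_real t * x)) has_derivative (\<lambda>h. DG G (of_real t * x) (of_real t * h))) (at x within U)"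
        using has_derivative_compose[OF l Gd] .
      from has_derivative_mult[OF this has_derivative_ident]
      have "((\<lambda>x. G (of_real t * x) * x) has_derivative (\<lambda>h. G (of_real t * x) * h + DG G (of_real t * x) (of_real t * h) * x)) (at x within U)" .
      then have "((\<lambda>x. Re (G (of_real t * x) * x)) has_derivative (\<lambda>h. Re (G (of_real t * x) * h + DG G (of_real t * x) (of_real t * h) * x))) (at x within U)"
        by (rule bounded_linear.has_derivative[OF bounded_linear_Re])
      moreover have "(\<lambda>h. Re (G (of_real t * x) * h + DG G (of_real t * x) (of_real t * h) * x)) = blinfun_apply (fx x t)"
        unfolding fx_app DG_scale by (auto simp: algebra_simps)
      ultimately show ?thesis by simp
    qed
    have pmap: "continuous_on (U \<times> cbox 0 1) (\<lambda>y. of_real (snd y) * fst y)" by (intro continuous_intros)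
    have im: "(\<lambda>y. of_real (snd y) * fst y) ` (U \<times> cbox 0 1) \<subseteq> W" using tW by auto
    have c1: "continuous_on (U \<times> cbox 0 1) (\<lambda>y. pu G (of_real (snd y) * fst y))"
      by (rule continuous_on_compose2[OF C1_pu[OF G] pmap im])
    have c2: "continuous_on (U \<times> cbox 0 1) (\<lambda>y. pv G (of_real (snd y) * fst y))"
      by (rule continuous_on_compose2[OF C1_pv[OF G] pmap im])
    have c3: "continuous_on (U \<times> cbox 0 1) (\<lambda>y. G (of_real (snd y) * fst y))"
      by (rule continuous_on_compose2[OF C1_cont[OF G] pmap im])
    have cont: "continuous_on (U \<times> cbox 0 1) (\<lambda>(x, t). fx x t)"
    proof (rule continuous_on_blinfun_componentwise)
      fix i :: complex
      have "continuous_on (U \<times> cbox 0 1) (\<lambda>y. snd y * Re (DG G (of_real (snd y) * fst y) i * fst y) + Re (G (of_real (snd y) * fst y) * i))"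
        unfolding DG_def by (intro continuous_intros c1 c2 c3)
      then show "continuous_on (U \<times> cbox 0 1) (\<lambda>y. blinfun_apply ((\<lambda>(x, t). fx x t) y) i)"
        by (simp add: case_prod_beta fx_app)
    qed
    have integ: "(\<lambda>t. Re (G (of_real t * x) * x)) integrable_on cbox 0 1" if "x \<in> U" for x
    proof (rule integrable_continuous)
      have pm: "continuous_on (cbox 0 1) (\<lambda>t::real. of_real t * x)" by (intro continuous_intros)
      have "(\<lambda>t::real. of_real t * x) ` cbox 0 1 \<subseteq> W" using tW that by auto
      from continuous_on_compose2[OF C1_cont[OF G] pm this]
      show "continuous_on (cbox 0 1) (\<lambda>t. Re (G (of_real t * x) * x))" by (intro continuous_intros)
    qed
    have L: "(m has_derivative blinfun_apply (integral (cbox 0 1) (fx z0))) (at z0 within U)"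
      unfolding m_def by (rule leibniz_rule[OF der integ cont U(3) U(2)])
    then have L: "(m has_derivative blinfun_apply (integral (cbox 0 1) (fx z0))) (at z0)"
      using at_within_open[OF U(3) U(1)] by simp
    have cfx: "continuous_on (cbox 0 1) (fx z0)"
    proof -
      have pm: "continuous_on (cbox 0 1) (\<lambda>t::real. (z0, t))" by (intro continuous_intros)
      have "(\<lambda>t::real. (z0, t)) ` cbox 0 1 \<subseteq> U \<times> cbox 0 1" using U(3) by auto
      from continuous_on_compose2[OF cont pm this] show ?thesis by simp
    qed
    have int_fx: "fx z0 integrable_on cbox 0 1" by (rule integrable_continuous[OF cfx])
    have "blinfun_apply (integral (cbox 0 1) (fx z0)) h = Re (G z0 * h)" for h
    proof -
      have "blinfun_apply (integral (cbox 0 1) (fx z0)) h = integral (cbox 0 1) (\<lambda>t. blinfun_apply (fx z0 t) h)"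
        using integral_linear[OF int_fx blinfun.bounded_linear_left[of h]] by (simp add: o_def)
      also have "\<dots> = integral {0..1} (\<lambda>t. t * Re (DG G (of_real t * z0) h * z0) + Re (G (of_real t * z0) * h))"
        by (simp add: fx_app)
      also have "\<dots> = Re (G z0 * h)"
      proof (rule integral_unique)
        define \<psi> where "\<psi> t = t * Re (G (of_real t * z0) * h)" for t :: real
        have "((\<lambda>t. t * Re (DG G (of_real t * z0) h * z0) + Re (G (of_real t * z0) * h)) has_integral (\<psi> 1 - \<psi> 0)) {0..1}"
        proof (rule fundamental_theorem_of_calculus)
          fix t :: real assume t: "t \<in> {0..1}"
          then have tz: "of_real t * z0 \<in> W" using tW[OF U(3)] by auto
          have Gd: "(G has_derivative DG G (of_real t * z0)) (at (of_real t * z0))"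
            by (rule DG_deriv[OF C1_diff[OF G tz]])
          have l: "((\<lambda>t::real. of_real t * z0) has_derivative (\<lambda>s. of_real s * z0)) (at t)"
            by (rule has_derivative_mult_left[OF has_derivative_of_real[OF has_derivative_ident]])
          have "((\<lambda>t::real. G (of_real t * z0)) has_derivative (\<lambda>s. DG G (of_real t * z0) (of_real s * z0))) (at t)"
            using has_derivative_compose[OF l Gd] .
          then have "((\<lambda>t::real. G (of_real t * z0) * h) has_derivative (\<lambda>s. DG G (of_real t * z0) (of_real s * z0) * h)) (at t)"
            by (rule has_derivative_mult_left)
          then have "((\<lambda>t::real. Re (G (of_real t * z0) * h)) has_derivative (\<lambda>s. Re (DG G (of_real t * z0) (of_real s * z0) * h))) (at t)"
            by (rule bounded_linear.has_derivative[OF bounded_linear_Re])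
          from has_derivative_mult[OF has_derivative_ident this]
          have "(\<psi> has_derivative (\<lambda>s. t * Re (DG G (of_real t * z0) (of_real s * z0) * h) + s * Re (G (of_real t * z0) * h))) (at t)"
            unfolding \<psi>_def[abs_def] .
          moreover have "(\<lambda>s. t * Re (DG G (of_real t * z0) (of_real s * z0) * h) + s * Re (G (of_real t * z0) * h)) =
              (\<lambda>s. s *\<^sub>R (t * Re (DG G (of_real t * z0) h * z0) + Re (G (of_real t * z0) * h)))"
            unfolding DG_scale DG_sym[OF cl[OF tz], of h z0] by (auto simp: algebra_simps)
          ultimately have "(\<psi> has_vector_derivative (t * Re (DG G (of_real t * z0) h * z0) + Re (G (of_real t * z0) * h))) (at t)"
            unfolding has_vector_derivative_def by simp
          then show "(\<psi> has_vector_derivative (t * Re (DG G (of_real t * z0) h * z0) + Re (G (of_real t * z0) * h))) (at t within {0..1})"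
            by (rule has_vector_derivative_at_within)
        qed simp
        then show "((\<lambda>t. t * Re (DG G (of_real t * z0) h * z0) + Re (G (of_real t * z0) * h)) has_integral Re (G z0 * h)) {0..1}"
          unfolding \<psi>_def by simp
      qed
      finally show ?thesis .
    qed
    then have "blinfun_apply (integral (cbox 0 1) (fx z0)) = (\<lambda>h. Re (G z0 * h))" by auto
    then show ?thesis using L by simp
  qed
  then show ?thesis by blast
qed

lemma dz_dzb_mult:
  assumes "f differentiable (at z)" "g differentiable (at z)"
  shows "dzb (\<lambda>w. f w * g w) z = dzb f z * g z + f z * dzb g z"
        "dz (\<lambda>w. f w * g w) z = dz f z * g z + f z * dz g z"
  unfolding dzb_def dz_def pu_pv_mult[OF assms] by (simp_all add: algebra_simps add_divide_distrib diff_divide_distrib)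

lemma C1_comp_holo:
  assumes S: "open S" and F: "C1_on S F" and g: "g holomorphic_on B" and B: "open B" and im: "g ` B \<subseteq> S"
  shows "C1_on B (\<lambda>w. F (g w))" "\<And>w. w \<in> B \<Longrightarrow> dzb (\<lambda>w. F (g w)) w = cnj (deriv g w) * dzb F (g w)"
proof -
  have D: "((\<lambda>w. F (g w)) has_derivative (\<lambda>h. DG F (g w) (deriv g w * h))) (at w)" if w: "w \<in> B" for w
  proof -
    have gd: "(g has_derivative (\<lambda>h. deriv g w * h)) (at w)"
      using holomorphic_derivI[OF g B w, of UNIV] unfolding has_field_derivative_def by simp
    have Fd: "(F has_derivative DG F (g w)) (at (g w))"
      using DG_deriv[OF C1_diff[OF F]] im w by auto
    show ?thesis using has_derivative_compose[OF gd Fd] .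
  qed
  have pu: "pu (\<lambda>w. F (g w)) w = DG F (g w) (deriv g w)" if "w \<in> B" for w
    using pu_deriv[OF D[OF that]] by simp
  have pv: "pv (\<lambda>w. F (g w)) w = DG F (g w) (deriv g w * \<i>)" if "w \<in> B" for w
    using pv_deriv[OF D[OF that]] by simp
  have cg: "continuous_on B g" by (rule holomorphic_on_imp_continuous_on[OF g])
  have cdg: "continuous_on B (deriv g)" by (rule holomorphic_on_imp_continuous_on[OF holomorphic_deriv[OF g B]])
  have cpu: "continuous_on B (\<lambda>w. pu F (g w))" by (rule continuous_on_compose2[OF C1_pu[OF F] cg im])
  have cpv: "continuous_on B (\<lambda>w. pv F (g w))" by (rule continuous_on_compose2[OF C1_pv[OF F] cg im])
  show "C1_on B (\<lambda>w. F (g w))"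
  proof (rule C1_onI)
    fix w assume "w \<in> B" then show "(\<lambda>w. F (g w)) differentiable (at w)"
      using D unfolding differentiable_def by blast
  next
    show "continuous_on B (pu (\<lambda>w. F (g w)))"
      by (rule continuous_on_eq[of _ "\<lambda>w. DG F (g w) (deriv g w)"])
         (auto simp: pu DG_def intro!: continuous_intros cpu cpv cdg)
    show "continuous_on B (pv (\<lambda>w. F (g w)))"
      by (rule continuous_on_eq[of _ "\<lambda>w. DG F (g w) (deriv g w * \<i>)"])
         (auto simp: pv DG_def intro!: continuous_intros cpu cpv cdg)
  qed
  fix w assume "w \<in> B"
  then show "dzb (\<lambda>w. F (g w)) w = cnj (deriv g w) * dzb F (g w)"
    unfolding dzb_def pu[OF \<open>w \<in> B\<close>] pv[OF \<open>w \<in> B\<close>] DG_def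
    by (simp add: complex_eq_iff algebra_simps)
qed

lemma global_potential:
  assumes S: "open S" "simply_connected S" and F: "C1_on S F" and cl: "\<And>z. z \<in> S \<Longrightarrow> Im (dzb F z) = 0"
  shows "\<exists>m. \<forall>z\<in>S. (m has_derivative (\<lambda>h. Re (F z * h))) (at z)"
proof -
  have "S = {} \<or> S = UNIV \<or>
     (\<exists>f g. f holomorphic_on S \<and> g holomorphic_on ball 0 1 \<and>
           (\<forall>z \<in> S. f z \<in> ball 0 1 \<and> g(f z) = z) \<and>
           (\<forall>z \<in> ball 0 1. g z \<in> S \<and> f(g z) = z))"
    using Riemann_mapping_theorem S by blast
  moreover
  { assume "S = {}" then have ?thesis by simp }
  moreover
  { assume "S = UNIV" then have ?thesis using poincare[of UNIV F] F cl by auto }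
  moreover
  { fix f g assume f: "f holomorphic_on S" and g: "g holomorphic_on ball 0 1"
      and fg: "\<forall>z \<in> S. f z \<in> ball 0 1 \<and> g(f z) = z" and gf: "\<forall>z \<in> ball 0 1. g z \<in> S \<and> f(g z) = z"
    define B where "B = ball (0::complex) 1"
    have B: "open B" "convex B" "0 \<in> B" unfolding B_def by auto
    have im: "g ` B \<subseteq> S" using gf unfolding B_def by auto
    note comp = C1_comp_holo[OF S(1) F g[folded B_def] B(1) im]
    define G where "G w = F (g w) * deriv g w" for w
    have hdg: "deriv g holomorphic_on B" using holomorphic_deriv[OF g] unfolding B_def by simp
    have CG: "C1_on B G" unfolding G_def[abs_def]
      by (rule C1_mult[OF comp(1) holo_C1[OF hdg B(1)]])
    have clG: "Im (dzb G w) = 0" if w: "w \<in> B" for w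
    proof -
      have "dzb G w = dzb (\<lambda>w. F (g w)) w * deriv g w + F (g w) * dzb (deriv g) w"
        unfolding G_def[abs_def]
        by (rule dz_dzb_mult(1)[OF C1_diff[OF comp(1) w] C1_diff[OF holo_C1[OF hdg B(1)] w]])
      also have "\<dots> = cnj (deriv g w) * deriv g w * dzb F (g w)"
        using comp(2)[OF w] holo_dzb(1)[OF hdg B(1) w] by simp
      also have "\<dots> = of_real ((cmod (deriv g w))\<^sup>2) * dzb F (g w)"
        using complex_norm_square[of "deriv g w"] by (metis mult.commute)
      finally show ?thesis using cl[of "g w"] im w by auto
    qed
    obtain m0 where m0: "\<And>z. z \<in> B \<Longrightarrow> (m0 has_derivative (\<lambda>h. Re (G z * h))) (at z)"
      using poincare[OF B CG clG] by blast
    have "((\<lambda>z. m0 (f z)) has_derivative (\<lambda>h. Re (F z * h))) (at z)" if z: "z \<in> S" for z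
    proof -
      have fd: "(f has_field_derivative deriv f z) (at z)" by (rule holomorphic_derivI[OF f S(1) z])
      have fzB: "f z \<in> B" using fg z unfolding B_def by auto
      have gd: "(g has_field_derivative deriv g (f z)) (at (f z))"
        using holomorphic_derivI[OF g _ fzB[unfolded B_def]] by simp
      have "((\<lambda>z. g (f z)) has_field_derivative deriv g (f z) * deriv f z) (at z)"
        using DERIV_chain[OF gd fd] by (simp add: o_def)
      moreover have "((\<lambda>z. g (f z)) has_field_derivative 1) (at z)"
        by (rule has_field_derivative_transform_within_open[OF DERIV_ident S(1) z]) (simp add: fg)
      ultimately have one: "deriv g (f z) * deriv f z = 1" by (rule DERIV_unique)
      have "((\<lambda>z. m0 (f z)) has_derivative (\<lambda>h. Re (G (f z) * (deriv f z * h)))) (at z)"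
        using has_derivative_compose[OF fd[unfolded has_field_derivative_def] m0[OF fzB]] .
      moreover have "G (f z) * (deriv f z * h) = F z * h" for h
      proof -
        have "G (f z) * (deriv f z * h) = F (g (f z)) * (deriv g (f z) * deriv f z) * h"
          unfolding G_def by (simp add: algebra_simps)
        then show ?thesis using one fg z by simp
      qed
      ultimately show ?thesis by simp
    qed
    then have ?thesis by blast }
  ultimately show ?thesis by blast
qed

lemma dz_dzb_cong:
  assumes "open S" "z \<in> S" "\<And>w. w \<in> S \<Longrightarrow> f w = g w"
  shows "dz f z = dz g z" "dzb f z = dzb g z"
  using pu_pv_cong[OF assms] by (simp_all add: dz_def dzb_def)

lemma dz_dzb_add:
  assumes "f differentiable (at z)" "g differentiable (at z)"
  shows "dzb (\<lambda>w. f w + g w) z = dzb f z + dzb g z"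
        "dz (\<lambda>w. f w + g w) z = dz f z + dz g z"
  unfolding dzb_def dz_def pu_pv_add[OF assms] by (simp_all add: algebra_simps add_divide_distrib diff_divide_distrib)

lemma dz_dzb_const: "dz (\<lambda>w. c) z = 0" "dzb (\<lambda>w. c) z = 0"
  unfolding dz_def dzb_def pu_pv_const by simp_all

lemma dz_dzb_cmult:
  assumes "f differentiable (at z)"
  shows "dzb (\<lambda>w. c * f w) z = c * dzb f z" "dz (\<lambda>w. c * f w) z = c * dz f z"
  using dz_dzb_mult[OF differentiable_const assms, of c] by (simp_all add: dz_dzb_const)

lemma dz_cnj:
  assumes "f differentiable (at z)"
  shows "dz (\<lambda>w. cnj (f w)) z = cnj (dzb f z)"
  unfolding dz_def dzb_def pu_pv_cnj[OF assms] by (simp add: complex_eq_iff)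

lemma dzb_cnj_dz:
  assumes "Im (pu f w) = 0" "Im (pv f w) = 0"
  shows "dzb f w = cnj (dz f w)"
  unfolding dz_def dzb_def using assms by (simp add: complex_eq_iff)

lemma lap_real:
  assumes S: "open S" and f: "C2_on S f" and r: "\<And>w. w \<in> S \<Longrightarrow> Im (f w) = 0" and z: "z \<in> S"
  shows "dzb (dz f) z = dz (dzb f) z" "Im (dz (dzb f) z) = 0"
proof -
  note sf = second_formulas[OF C1_diff[OF C2_pu[OF f] z] C1_diff[OF C2_pv[OF f] z]]
  note rs = real_second[OF S f r z]
  note sw = schwarz_re[OF S f z]
  show "Im (dz (dzb f) z) = 0" unfolding sf using rs sw by simp
  show "dzb (dz f) z = dz (dzb f) z" unfolding sf using rs sw by (simp add: complex_eq_iff)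
qed

lemma pot_C2:
  assumes S: "open S" and F: "C1_on S F" and M: "\<And>z. z \<in> S \<Longrightarrow> (M has_derivative (\<lambda>h. 2 * Re (F z * h))) (at z)"
  shows "C2_on S (cr M)" "\<And>z. z \<in> S \<Longrightarrow> dz (cr M) z = F z"
proof -
  have D: "(cr M has_derivative (\<lambda>h. of_real (2 * Re (F z * h)))) (at z)" if "z \<in> S" for z
    unfolding cr_def[abs_def] by (rule has_derivative_of_real[OF M[OF that]])
  have pu: "pu (cr M) z = F z + cnj (F z)" if "z \<in> S" for z
    using pu_deriv[OF D[OF that]] by (simp add: complex_add_cnj)
  have pv: "pv (cr M) z = \<i> * (F z - cnj (F z))" if "z \<in> S" for z
    using pv_deriv[OF D[OF that]] by (simp add: complex_eq_iff)
  have C1a: "C1_on S (\<lambda>z. F z + cnj (F z))" by (rule C1_add[OF F C1_cnj[OF F]])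
  have C1b: "C1_on S (\<lambda>z. \<i> * (F z - cnj (F z)))" by (rule C1_mult[OF C1_const C1_diff_fun[OF F C1_cnj[OF F]]])
  show "C2_on S (cr M)"
  proof (rule C2_onI)
    show "C1_on S (cr M)"
    proof (rule C1_onI)
      fix z assume "z \<in> S" then show "cr M differentiable (at z)" using D unfolding differentiable_def by blast
    next
      show "continuous_on S (pu (cr M))"
        by (rule continuous_on_eq[OF C1_cont[OF C1a]]) (simp add: pu)
      show "continuous_on S (pv (cr M))"
        by (rule continuous_on_eq[OF C1_cont[OF C1b]]) (simp add: pv)
    qed
    show "C1_on S (pu (cr M))" by (rule C1_on_cong[OF S _ C1a]) (simp add: pu)
    show "C1_on S (pv (cr M))" by (rule C1_on_cong[OF S _ C1b]) (simp add: pv)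
  qed
  fix z assume "z \<in> S"
  then show "dz (cr M) z = F z" unfolding dz_def pu[OF \<open>z \<in> S\<close>] pv[OF \<open>z \<in> S\<close>]
    by (simp add: complex_eq_iff)
qed

lemma alg:
  fixes g a b :: complex
  assumes "g \<noteq> 0"
  shows "(1 / g) * a + g * b - of_real (Re (1 / g)) * (2 * a) = - (1 / cnj g) * (a - of_real ((cmod g)\<^sup>2) * b)"
proof -
  have e1: "of_real (Re (1/g)) * 2 = 1/g + 1 / cnj g"
    using complex_add_cnj[of "1/g"] by simp
  have e2: "of_real ((cmod g)\<^sup>2) = g * cnj g" by (rule complex_norm_square)
  have cg: "cnj g \<noteq> 0" using assms by simp
  have "(1 / g) * a + g * b - of_real (Re (1 / g)) * (2 * a) = (1 / g) * a + g * b - (of_real (Re (1/g)) * 2) * a"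
    by simp
  also have "\<dots> = (1 / g) * a + g * b - (1/g + 1 / cnj g) * a" unfolding e1 ..
  also have "\<dots> = - (1 / cnj g) * (a - (g * cnj g) * b)" using assms cg by (simp add: field_simps)
  finally show ?thesis unfolding e2 .
qed

theorem mainTheorem1:
  fixes \<Omega> :: "complex set" and g :: "complex \<Rightarrow> complex" and P Q :: "complex \<Rightarrow> real"
  assumes "open \<Omega>" and "connected \<Omega>" and "simply_connected \<Omega>"
    and "WD1 \<Omega> g P Q"
  defines "h \<equiv> (\<lambda>z. 1 / g z)" and "N \<equiv> (\<lambda>z. 2 * P z)"
  shows "(\<exists>M :: complex \<Rightarrow> real. C2_on \<Omega> (cr M) \<and>
            (\<forall>z\<in>\<Omega>. dz (cr M) z = (1 / g z) * dz (cr P) z + g z * dz (cr Q) z))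
       \<and> (\<forall>M :: complex \<Rightarrow> real. C2_on \<Omega> (cr M) \<and>
            (\<forall>z\<in>\<Omega>. dz (cr M) z = (1 / g z) * dz (cr P) z + g z * dz (cr Q) z) \<longrightarrow>
            WD2 \<Omega> h M N \<and>
            (\<forall>z\<in>\<Omega>. dz (cr M) z - complex_of_real (Re (h z)) * dz (cr N) z
               = - (1 / cnj (g z)) * (dz (cr P) z - complex_of_real ((cmod (g z))\<^sup>2) * dz (cr Q) z)))"
proof -
  have Om: "open \<Omega>" by (rule assms(1))
  have Cg: "C2_on \<Omega> g" using assms(4) unfolding WD1_def by blast
  have CP: "C2_on \<Omega> (cr P)" using assms(4) unfolding WD1_def by blast
  have CQ: "C2_on \<Omega> (cr Q)" using assms(4) unfolding WD1_def by blast
  have g0: "\<And>z. z \<in> \<Omega> \<Longrightarrow> g z \<noteq> 0" using assms(4) unfolding WD1_def by blast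
  have gh: "\<And>z. z \<in> \<Omega> \<Longrightarrow> dzb g z = 0" using assms(4) unfolding WD1_def by blast
  have hyp2: "\<And>z. z \<in> \<Omega> \<Longrightarrow> dz (dzb (cr P)) z = complex_of_real ((cmod (g z))\<^sup>2) * dz (dzb (cr Q)) z"
    using assms(4) unfolding WD1_def by blast
  have hyp3: "\<And>z. z \<in> \<Omega> \<Longrightarrow> dz (cr P) z - complex_of_real ((cmod (g z))\<^sup>2) * dz (cr Q) z \<noteq> 0"
    using assms(4) unfolding WD1_def by blast
  have rP: "\<And>w. w \<in> \<Omega> \<Longrightarrow> Im (cr P w) = 0" by (simp add: cr_def)
  have rQ: "\<And>w. w \<in> \<Omega> \<Longrightarrow> Im (cr Q w) = 0" by (simp add: cr_def)
  have ghol: "g holomorphic_on \<Omega>" by (rule dzb_zero_holo_on[OF Om C2_C1[OF Cg] gh])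
  have hhol: "(\<lambda>z. 1 / g z) holomorphic_on \<Omega>" using ghol g0 by (intro holomorphic_intros) auto
  define F where "F z = (1 / g z) * dz (cr P) z + g z * dz (cr Q) z" for z
  have CF: "C1_on \<Omega> F" unfolding F_def[abs_def]
    by (rule C1_add[OF C1_mult[OF holo_C1[OF hhol Om] C1_dz[OF CP]] C1_mult[OF C2_C1[OF Cg] C1_dz[OF CQ]]])
  have dzbF: "dzb F z = of_real (2 * Re (g z) * Re (dz (dzb (cr Q)) z))" if z: "z \<in> \<Omega>" for z
  proof -
    define r where "r = Re (dz (dzb (cr Q)) z)"
    have qr: "dz (dzb (cr Q)) z = of_real r"
      using lap_real(2)[OF Om CQ rQ z] unfolding r_def by (simp add: complex_eq_iff)
    have d1: "(\<lambda>z. 1/g z) differentiable (at z)" by (rule C1_diff[OF holo_C1[OF hhol Om] z])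
    have d2: "dz (cr P) differentiable (at z)" by (rule C1_diff[OF C1_dz[OF CP] z])
    have d3: "g differentiable (at z)" by (rule C1_diff[OF C2_C1[OF Cg] z])
    have d4: "dz (cr Q) differentiable (at z)" by (rule C1_diff[OF C1_dz[OF CQ] z])
    have "dzb F z = (dzb (\<lambda>z. 1 / g z) z * dz (cr P) z + (1 / g z) * dzb (dz (cr P)) z) +
        (dzb g z * dz (cr Q) z + g z * dzb (dz (cr Q)) z)"
      unfolding F_def[abs_def] dz_dzb_add(1)[OF differentiable_mult[OF d1 d2] differentiable_mult[OF d3 d4]]
        dz_dzb_mult(1)[OF d1 d2] dz_dzb_mult(1)[OF d3 d4] ..
    also have "\<dots> = (1 / g z) * dz (dzb (cr P)) z + g z * dz (dzb (cr Q)) z"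
      using holo_dzb(1)[OF hhol Om z] gh[OF z] lap_real(1)[OF Om CP rP z] lap_real(1)[OF Om CQ rQ z] by simp
    also have "\<dots> = (1 / g z) * (g z * cnj (g z)) * of_real r + g z * of_real r"
      unfolding hyp2[OF z] qr complex_norm_square by simp
    also have "\<dots> = (g z + cnj (g z)) * of_real r" using g0[OF z] by (simp add: field_simps)
    also have "\<dots> = of_real (2 * Re (g z) * r)" unfolding complex_add_cnj by simp
    finally show ?thesis unfolding r_def .
  qed
  have clF: "Im (dzb F z) = 0" if "z \<in> \<Omega>" for z using dzbF[OF that] by simp
  obtain m where m: "\<And>z. z \<in> \<Omega> \<Longrightarrow> (m has_derivative (\<lambda>h. Re (F z * h))) (at z)"
    using global_potential[OF Om assms(3) CF clF] by blast
  have m2: "((\<lambda>z. 2 * m z) has_derivative (\<lambda>h. 2 * Re (F z * h))) (at z)" if "z \<in> \<Omega>" for z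
    by (rule has_derivative_mult_right[OF m[OF that]])
  note pc = pot_C2[OF Om CF m2]
  have part1: "\<exists>M :: complex \<Rightarrow> real. C2_on \<Omega> (cr M) \<and>
            (\<forall>z\<in>\<Omega>. dz (cr M) z = (1 / g z) * dz (cr P) z + g z * dz (cr Q) z)"
    using pc unfolding F_def by blast
  have part2: "WD2 \<Omega> h M N \<and>
            (\<forall>z\<in>\<Omega>. dz (cr M) z - complex_of_real (Re (h z)) * dz (cr N) z
               = - (1 / cnj (g z)) * (dz (cr P) z - complex_of_real ((cmod (g z))\<^sup>2) * dz (cr Q) z))"
    if CM: "C2_on \<Omega> (cr M)" and dM0: "\<forall>z\<in>\<Omega>. dz (cr M) z = (1 / g z) * dz (cr P) z + g z * dz (cr Q) z"
    for M :: "complex \<Rightarrow> real"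
  proof -
    have dM: "\<And>z. z \<in> \<Omega> \<Longrightarrow> dz (cr M) z = F z" using dM0 unfolding F_def by blast
    have crN: "cr N = (\<lambda>z. 2 * cr P z)" unfolding N_def cr_def by auto
    have CN: "C2_on \<Omega> (cr N)" unfolding crN by (rule C2_mult[OF Om C2_const CP])
    have dzN: "dz (cr N) z = 2 * dz (cr P) z" if z: "z \<in> \<Omega>" for z
      unfolding crN by (rule dz_dzb_cmult(2)[OF C1_diff[OF C2_C1[OF CP] z]])
    have dzbN: "dzb (cr N) w = 2 * dzb (cr P) w" if w: "w \<in> \<Omega>" for w
      unfolding crN by (rule dz_dzb_cmult(1)[OF C1_diff[OF C2_C1[OF CP] w]])
    have hh: "h holomorphic_on \<Omega>" unfolding h_def by (rule hhol)
    have rM: "\<And>w. w \<in> \<Omega> \<Longrightarrow> Im (cr M w) = 0" by (simp add: cr_def)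
    have second: "dz (dzb (cr M)) z = complex_of_real (Re (h z)) * dz (dzb (cr N)) z" if z: "z \<in> \<Omega>" for z
    proof -
      have e1: "dzb (cr M) w = cnj (F w)" if w: "w \<in> \<Omega>" for w
      proof -
        note rp = real_partials[OF Om w rM C1_diff[OF C2_C1[OF CM] w]]
        show ?thesis using dzb_cnj_dz[OF rp] dM[OF w] by simp
      qed
      have "dz (dzb (cr M)) z = dz (\<lambda>w. cnj (F w)) z" by (rule dz_dzb_cong(1)[OF Om z e1])
      also have "\<dots> = cnj (dzb F z)" by (rule dz_cnj[OF C1_diff[OF CF z]])
      also have "\<dots> = of_real (2 * Re (g z) * Re (dz (dzb (cr Q)) z))" unfolding dzbF[OF z] by simp
      finally have L: "dz (dzb (cr M)) z = of_real (2 * Re (g z) * Re (dz (dzb (cr Q)) z))" .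
      have "dz (dzb (cr N)) z = dz (\<lambda>w. 2 * dzb (cr P) w) z" by (rule dz_dzb_cong(1)[OF Om z dzbN])
      also have "\<dots> = 2 * dz (dzb (cr P)) z" by (rule dz_dzb_cmult(2)[OF C1_diff[OF C1_dzb[OF CP] z]])
      finally have R: "dz (dzb (cr N)) z = 2 * (of_real ((cmod (g z))\<^sup>2) * dz (dzb (cr Q)) z)"
        unfolding hyp2[OF z] .
      define r where "r = Re (dz (dzb (cr Q)) z)"
      have qr: "dz (dzb (cr Q)) z = of_real r"
        using lap_real(2)[OF Om CQ rQ z] unfolding r_def by (simp add: complex_eq_iff)
      have gz: "g z \<noteq> 0" by (rule g0[OF z])
      have "Re (h z) = Re (g z) / (cmod (g z))\<^sup>2" unfolding h_def by (simp add: Re_divide cmod_power2)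
      then have e: "Re (h z) * (cmod (g z))\<^sup>2 = Re (g z)" using gz by simp
      have "complex_of_real (Re (h z)) * (2 * (complex_of_real ((cmod (g z))\<^sup>2) * complex_of_real r)) =
            complex_of_real (2 * (Re (h z) * (cmod (g z))\<^sup>2) * r)" by simp
      also have "\<dots> = complex_of_real (2 * Re (g z) * r)" unfolding e ..
      finally have X: "complex_of_real (Re (h z)) * (2 * (complex_of_real ((cmod (g z))\<^sup>2) * complex_of_real r)) =
            complex_of_real (2 * Re (g z) * r)" .
      show ?thesis unfolding L R qr r_def[symmetric] Re_complex_of_real by (rule X[symmetric])
    qed
    have form: "dz (cr M) z - complex_of_real (Re (h z)) * dz (cr N) z
               = - (1 / cnj (g z)) * (dz (cr P) z - complex_of_real ((cmod (g z))\<^sup>2) * dz (cr Q) z)"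
      if z: "z \<in> \<Omega>" for z
      unfolding dM[OF z] dzN[OF z] F_def h_def by (rule alg[OF g0[OF z]])
    have "WD2 \<Omega> h M N"
      unfolding WD2_def
    proof (intro conjI ballI)
      show "C2_on \<Omega> h" by (rule holo_C2[OF hh Om])
      show "C2_on \<Omega> (cr M)" by (rule CM)
      show "C2_on \<Omega> (cr N)" by (rule CN)
      fix z assume z: "z \<in> \<Omega>"
      show "h z \<noteq> 0" unfolding h_def using g0[OF z] by simp
      show "dzb h z = 0" by (rule holo_dzb(1)[OF hh Om z])
      show "dz (dzb (cr M)) z = complex_of_real (Re (h z)) * dz (dzb (cr N)) z" by (rule second[OF z])
      show "dz (cr M) z - complex_of_real (Re (h z)) * dz (cr N) z \<noteq> 0"
        unfolding form[OF z] using hyp3[OF z] g0[OF z] by simp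
    qed
    then show ?thesis using form by blast
  qed
  show ?thesis using part1 part2 by blast
qed

end
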